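(* For every integer $n\ge 5$, the independence polynomial $I(T_{5,n};t)$ is unimodal and its mode belongs to $\{\lambda_{n+2},\lambda_{n+2}+1,\lambda_{n+2}+2\}$, where $\lambda_{k}$ denotes the mode of the independence polynomial $I(P_k;t)$ of the path $P_k$ on $k$ vertices.
   Context: For a simple graph $G$, the independence polynomial is $I(G;t)=\sum_{k\ge 0}s_k(G)t^k$, where $s_k(G)$ is the number of independent sets (sets of pairwise non-adjacent vertices) of size $k$ in $G$. $P_k$ is the path on $k$ vertices; its independence polynomial is known to be unimodal. For integers $m\ge 3$, $n\ge 1$, the tadpole graph $T_{m,n}$ is the simple graph with vertex set $\{x_1,\dots,x_m,y_1,\dots,y_n\}$ and edges $\{x_i,x_{i+1}\}$ for $1\le i\le m-1$, $\{x_m,x_1\}$, $\{y_j,y_{j+1}\}$ for $1\le j\le n-1$, and $\{x_m,y_1\}$. A polynomial $\sum a_kt^k$ with nonnegative coefficients is unimodal if $a_0\le\cdots\le a_m\ge a_{m+1}\ge\cdots$ for some $m$; with $a_{-1}=0$, its mode is the unique $i$ with $a_{i-1}<a_i\ge a_{i+1}\ge a_{i+2}\ge\cdots$. *)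

theory Defs
  imports Main "HOL-Computational_Algebra.Polynomial"
begin

text \<open>A simple graph is given by a finite vertex set V and a symmetric,
irreflexive adjacency predicate E (only its restriction to V matters).\<close>

definition independent_set :: "'a set \<Rightarrow> ('a \<Rightarrow> 'a \<Rightarrow> bool) \<Rightarrow> 'a set \<Rightarrow> bool" where
  "independent_set V E S \<longleftrightarrow> S \<subseteq> V \<and> (\<forall>x\<in>S. \<forall>y\<in>S. \<not> E x y)"

definition indep_count :: "'a set \<Rightarrow> ('a \<Rightarrow> 'a \<Rightarrow> bool) \<Rightarrow> nat \<Rightarrow> nat" where
  "indep_count V E k = card {S. independent_set V E S \<and> card S = k}"

definition indep_poly :: "'a set \<Rightarrow> ('a \<Rightarrow> 'a \<Rightarrow> bool) \<Rightarrow> nat poly" where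
  "indep_poly V E = (\<Sum>k\<le>card V. monom (indep_count V E k) k)"

definition unimodal :: "nat poly \<Rightarrow> bool" where
  "unimodal p \<longleftrightarrow> (\<exists>m. (\<forall>i<m. coeff p i \<le> coeff p (Suc i)) \<and>
                          (\<forall>i\<ge>m. coeff p (Suc i) \<le> coeff p i))"

definition is_mode :: "nat poly \<Rightarrow> nat \<Rightarrow> bool" where
  "is_mode p i \<longleftrightarrow> (if i = 0 then 0 < coeff p 0 else coeff p (i - 1) < coeff p i) \<and>
                     (\<forall>j\<ge>i. coeff p (Suc j) \<le> coeff p j)"

definition mode :: "nat poly \<Rightarrow> nat" where
  "mode p = (THE i. is_mode p i)"

definition path_V :: "nat \<Rightarrow> nat set" where
  "path_V k = {1..k}"

definition path_E :: "nat \<Rightarrow> nat \<Rightarrow> bool" where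
  "path_E i j \<longleftrightarrow> j = Suc i \<or> i = Suc j"

text \<open>Tadpole T_{m,n}: x_i = Inl i (1 <= i <= m), y_j = Inr j (1 <= j <= n).\<close>
definition tadpole_V :: "nat \<Rightarrow> nat \<Rightarrow> (nat + nat) set" where
  "tadpole_V m n = Inl ` {1..m} \<union> Inr ` {1..n}"

fun tadpole_arc :: "nat \<Rightarrow> nat \<Rightarrow> (nat + nat) \<Rightarrow> (nat + nat) \<Rightarrow> bool" where
  "tadpole_arc m n (Inl i) (Inl j) \<longleftrightarrow>
     (1 \<le> i \<and> i \<le> m - 1 \<and> j = Suc i) \<or> (i = m \<and> j = 1)"
| "tadpole_arc m n (Inr i) (Inr j) \<longleftrightarrow> 1 \<le> i \<and> i \<le> n - 1 \<and> j = Suc i"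
| "tadpole_arc m n (Inl i) (Inr j) \<longleftrightarrow> i = m \<and> j = 1"
| "tadpole_arc m n (Inr i) (Inl j) \<longleftrightarrow> False"

definition tadpole_E :: "nat \<Rightarrow> nat \<Rightarrow> (nat + nat) \<Rightarrow> (nat + nat) \<Rightarrow> bool" where
  "tadpole_E m n u v \<longleftrightarrow> tadpole_arc m n u v \<or> tadpole_arc m n v u"

end

theory Submission
  imports Defs
begin

lemma indep_sets_finite: "finite V \<Longrightarrow> finite {S. independent_set V E S \<and> card S = k}"
  by (rule finite_subset[of _ "Pow V"]) (auto simp: independent_set_def)

lemma indep_count_big: "finite V \<Longrightarrow> card V < k \<Longrightarrow> indep_count V E k = 0"
  unfolding indep_count_def independent_set_def
  using card_mono by fastforce

lemma coeff_indep_poly: "finite V \<Longrightarrow> coeff (indep_poly V E) k = indep_count V E k"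
proof -
  assume f: "finite V"
  have "coeff (indep_poly V E) k = (\<Sum>i\<le>card V. if i = k then indep_count V E i else 0)"
    unfolding indep_poly_def coeff_sum by simp
  also have "\<dots> = (if k \<le> card V then indep_count V E k else 0)"
    by (simp add: sum.delta)
  also have "\<dots> = indep_count V E k" using indep_count_big[OF f, of k E] by auto
  finally show ?thesis .
qed

lemma indep_count_zero: "finite V \<Longrightarrow> indep_count V E 0 = 1"
proof -
  assume f: "finite V"
  have "{S. independent_set V E S \<and> card S = 0} = {{}}"
    using f by (auto simp: independent_set_def) (metis card_0_eq empty_iff finite_subset)
  thus ?thesis by (simp add: indep_count_def)
qed

lemma indep_count_cong:
  assumes "\<And>x y. x \<in> V \<Longrightarrow> y \<in> V \<Longrightarrow> E x y = E' x y"
  shows "indep_count V E k = indep_count V E' k"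
proof -
  have "{S. independent_set V E S \<and> card S = k} = {S. independent_set V E' S \<and> card S = k}"
    using assms by (auto simp: independent_set_def) (metis subsetD)+
  thus ?thesis by (simp add: indep_count_def)
qed

lemma indep_count_delete:
  assumes f: "finite V" and v: "v \<in> V" and irr: "\<not> E v v"
  shows "indep_count V E (Suc j) = indep_count (V - {v}) E (Suc j)
           + indep_count (V - {v} - {u. E v u \<or> E u v}) E j"
proof -
  define A where "A = {S. independent_set V E S \<and> card S = Suc j}"
  define A1 where "A1 = {S. independent_set (V - {v}) E S \<and> card S = Suc j}"
  define B where "B = {S. independent_set (V - {v} - {u. E v u \<or> E u v}) E S \<and> card S = j}"
  have A_split: "A = A1 \<union> insert v ` B"
  proof (intro equalityI subsetI)
    fix S assume S: "S \<in> A"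
    show "S \<in> A1 \<union> insert v ` B"
    proof (cases "v \<in> S")
      case False thus ?thesis using S by (auto simp: A_def A1_def independent_set_def)
    next
      case True
      have fS: "finite S" using S f by (auto simp: A_def independent_set_def intro: finite_subset)
      have "S - {v} \<in> B" using S True fS
        by (auto simp: A_def B_def independent_set_def)
      moreover have "S = insert v (S - {v})" using True by auto
      ultimately show ?thesis by blast
    qed
  next
    fix S assume "S \<in> A1 \<union> insert v ` B"
    thus "S \<in> A"
    proof
      assume "S \<in> A1" thus ?thesis by (auto simp: A_def A1_def independent_set_def)
    next
      assume "S \<in> insert v ` B"
      then obtain T where T: "T \<in> B" "S = insert v T" by auto
      have fT: "finite T" using T f by (auto simp: B_def independent_set_def intro: finite_subset)
      have "v \<notin> T" using T by (auto simp: B_def independent_set_def)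
      thus ?thesis using T fT v irr by (auto simp: A_def B_def independent_set_def)
    qed
  qed
  have fA1: "finite A1" unfolding A1_def using f by (rule indep_sets_finite[OF finite_Diff])
  have fB: "finite B" unfolding B_def using f by (intro indep_sets_finite) auto
  have disj: "A1 \<inter> insert v ` B = {}" by (auto simp: A1_def independent_set_def)
  have inj: "inj_on (insert v) B"
    by (rule inj_onI) (auto simp: B_def independent_set_def)
  have "card A = card A1 + card (insert v ` B)"
    unfolding A_split using fA1 fB disj by (simp add: card_Un_disjoint)
  also have "\<dots> = card A1 + card B" using card_image[OF inj] by simp
  finally show ?thesis by (simp add: indep_count_def A_def A1_def B_def)
qed

definition pc :: "nat \<Rightarrow> nat \<Rightarrow> nat" where "pc k j = (k + 1 - j) choose j"

lemma pc_0[simp]: "pc k 0 = 1" by (simp add: pc_def)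

lemma pc_rec: "pc (Suc (Suc k)) (Suc j) = pc (Suc k) (Suc j) + pc k j"
proof (cases "j \<le> k + 1")
  case True
  hence "Suc (Suc k) + 1 - Suc j = Suc (k + 1 - j)" by simp
  moreover have "Suc k + 1 - Suc j = k + 1 - j" by simp
  ultimately show ?thesis by (simp add: pc_def)
next
  case False thus ?thesis by (simp add: pc_def)
qed

lemma path_V_fin[simp]: "finite (path_V k)" by (simp add: path_V_def)

lemma path_count_rec:
  "indep_count (path_V (Suc (Suc k))) path_E (Suc j) =
   indep_count (path_V (Suc k)) path_E (Suc j) + indep_count (path_V k) path_E j"
proof -
  have "indep_count (path_V (Suc (Suc k))) path_E (Suc j) =
     indep_count (path_V (Suc (Suc k)) - {Suc (Suc k)}) path_E (Suc j) +
     indep_count (path_V (Suc (Suc k)) - {Suc (Suc k)} - {u. path_E (Suc (Suc k)) u \<or> path_E u (Suc (Suc k))}) path_E j"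
    by (rule indep_count_delete) (auto simp: path_V_def path_E_def)
  moreover have "path_V (Suc (Suc k)) - {Suc (Suc k)} = path_V (Suc k)" by (auto simp: path_V_def)
  moreover have "path_V (Suc (Suc k)) - {Suc (Suc k)} - {u. path_E (Suc (Suc k)) u \<or> path_E u (Suc (Suc k))} = path_V k"
    by (auto simp: path_V_def path_E_def)
  ultimately show ?thesis by simp
qed

lemma path_count_1:
  "indep_count (path_V (Suc 0)) path_E (Suc j) = indep_count (path_V 0) path_E (Suc j) + indep_count (path_V 0) path_E j"
proof -
  have "indep_count (path_V (Suc 0)) path_E (Suc j) =
     indep_count (path_V (Suc 0) - {1}) path_E (Suc j) +
     indep_count (path_V (Suc 0) - {1} - {u. path_E 1 u \<or> path_E u 1}) path_E j"
    by (rule indep_count_delete) (auto simp: path_V_def path_E_def)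
  moreover have "path_V (Suc 0) - {1} = path_V 0" by (auto simp: path_V_def)
  moreover have "path_V (Suc 0) - {1} - {u. path_E 1 u \<or> path_E u 1} = path_V 0"
    by (auto simp: path_V_def path_E_def)
  ultimately show ?thesis by simp
qed

lemma path_count_0: "indep_count (path_V 0) path_E j = pc 0 j"
proof (cases j)
  case 0 thus ?thesis by (simp add: indep_count_zero)
next
  case (Suc i) thus ?thesis by (simp add: indep_count_big path_V_def pc_def)
qed

lemma path_count: "indep_count (path_V k) path_E j = pc k j"
proof (induction k arbitrary: j rule: less_induct)
  case (less k)
  show ?case
  proof (cases j)
    case 0 thus ?thesis by (simp add: indep_count_zero)
  next
    case (Suc i)
    show ?thesis
    proof (cases k)
      case 0 thus ?thesis using path_count_0 by simp
    next
      case (Suc k1)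
      show ?thesis
      proof (cases k1)
        case 0
        thus ?thesis using \<open>j = Suc i\<close> Suc path_count_1 path_count_0
          by (cases i) (simp_all add: pc_def)
      next
        case (Suc k2)
        thus ?thesis using \<open>j = Suc i\<close> \<open>k = Suc k1\<close> path_count_rec less pc_rec by simp
      qed
    qed
  qed
qed

definition D :: "nat \<Rightarrow> nat \<Rightarrow> bool" where "D k j \<longleftrightarrow> pc k (Suc j) \<le> pc k j"

definition Q :: "int \<Rightarrow> int \<Rightarrow> int" where
  "Q M j = M*M - 5*M*j + 5*j*j - 2*M + 3*j"

lemma D_triv: "k < 2*j \<Longrightarrow> D k j"
  by (simp add: D_def pc_def binomial_eq_0)

lemma pc_ratio:
  assumes "2*j \<le> k"
  shows "pc k (Suc j) * ((j+1) * (k+1-j)) = pc k j * ((k+1-2*j) * (k-2*j))"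
proof -
  define m where "m = k - j"
  have jm: "j \<le> m" using assms by (simp add: m_def)
  have e1: "pc k (Suc j) = m choose Suc j" by (simp add: pc_def m_def)
  have e2: "pc k j = Suc m choose j" using assms by (simp add: pc_def m_def Suc_diff_le)
  have e3: "k+1-j = Suc m" "k+1-2*j = Suc m - j" "k - 2*j = m - j" using assms by (simp_all add: m_def)
  have a1: "Suc j * (m choose Suc j) = m * ((m - 1) choose j)" by (rule binomial_absorption)
  have a2: "(m - j) * (m choose j) = m * ((m - 1) choose j)" by (rule binomial_absorb_comp)
  have a3: "(Suc m - j) * (Suc m choose j) = Suc m * (m choose j)"
    using binomial_absorb_comp[of "Suc m" j] by simp
  have "pc k (Suc j) * ((j+1) * (k+1-j)) = (Suc j * (m choose Suc j)) * Suc m"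
    unfolding e1 e3 by (simp add: algebra_simps)
  also have "\<dots> = ((m - j) * (m choose j)) * Suc m" using a1 a2 by simp
  also have "\<dots> = ((Suc m - j) * (Suc m choose j)) * (m - j)" using a3 by (simp add: algebra_simps)
  also have "\<dots> = pc k j * ((k+1-2*j) * (k-2*j))" unfolding e2 e3 by simp
  finally show ?thesis .
qed

lemma D_iff:
  assumes "2*j \<le> k"
  shows "D k j \<longleftrightarrow> Q (int k + 1) (int j) \<le> 0"
proof -
  have pos: "0 < pc k j" using assms by (simp add: pc_def)
  have pos2: "0 < (j+1) * (k+1-j)" using assms by simp
  have "D k j \<longleftrightarrow> pc k (Suc j) * ((j+1) * (k+1-j)) \<le> pc k j * ((j+1) * (k+1-j))"
    unfolding D_def using pos2 by simp
  also have "\<dots> \<longleftrightarrow> pc k j * ((k+1-2*j) * (k-2*j)) \<le> pc k j * ((j+1) * (k+1-j))"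
    using pc_ratio[OF assms] by simp
  also have "\<dots> \<longleftrightarrow> (k+1-2*j) * (k-2*j) \<le> (j+1) * (k+1-j)"
    using pos by simp
  also have "\<dots> \<longleftrightarrow> int (k+1-2*j) * int (k-2*j) \<le> int (j+1) * int (k+1-j)"
    by (simp only: of_nat_mult[symmetric] of_nat_le_iff)
  also have "\<dots> \<longleftrightarrow> Q (int k + 1) (int j) \<le> 0"
  proof -
    have ii: "int (k+1-2*j) = int k + 1 - 2 * int j" "int (k-2*j) = int k - 2 * int j"
      "int (j+1) = int j + 1" "int (k+1-j) = int k + 1 - int j"
      using assms by (simp_all add: of_nat_diff)
    show ?thesis unfolding ii by (simp add: Q_def algebra_simps)
  qed
  finally show ?thesis .
qed

lemma D_step: "D k j \<Longrightarrow> D k (Suc j)"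
proof (cases "k < 2 * Suc j")
  case True thus ?thesis by (rule D_triv)
next
  case False
  assume d: "D k j"
  have h1: "2*j \<le> k" "2 * Suc j \<le> k" using False by auto
  have q: "Q (int k + 1) (int j) \<le> 0" using d D_iff[OF h1(1)] by simp
  have "2 * j + 2 \<le> k" using h1(2) by simp
  hence "int (2 * j + 2) \<le> int k" by (simp only: of_nat_le_iff)
  hence hk: "2 * int j + 2 \<le> int k" by simp
  have "Q (int k + 1) (int (Suc j)) = Q (int k + 1) (int j) + 10 * int j + 3 - 5 * int k"
    by (simp add: Q_def algebra_simps)
  also have "\<dots> \<le> 0" using q hk by linarith
  finally show ?thesis using D_iff[OF h1(2)] by simp
qed

lemma D_mono: "D k j \<Longrightarrow> j \<le> i \<Longrightarrow> D k i"
  by (induction i) (auto intro: D_step simp: le_Suc_eq)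

lemma D_self: "D k k"
  by (simp add: D_def pc_def)

lemma F4: "D n j \<Longrightarrow> D (n+2) (Suc j)"
proof (cases "n + 2 < 2 * Suc j")
  case True thus ?thesis by (rule D_triv)
next
  case False
  assume d: "D n j"
  have h1: "2*j \<le> n" "2 * Suc j \<le> n+2" using False by auto
  have q: "Q (int n + 1) (int j) \<le> 0" using d D_iff[OF h1(1)] by simp
  have "Q (int (n+2) + 1) (int (Suc j)) = Q (int n + 1) (int j) - (int n + 1) - 2"
    by (simp add: Q_def algebra_simps)
  also have "\<dots> \<le> 0" using q h1 by linarith
  finally show ?thesis using D_iff[OF h1(2)] by simp
qed

lemma F5: "D (n+2) j \<Longrightarrow> D n j"
proof (cases "n < 2 * j")
  case True thus ?thesis by (rule D_triv)
next
  case False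
  assume d: "D (n+2) j"
  have h1: "2*j \<le> n" "2 * j \<le> n+2" using False by auto
  define M where "M = int n + 1"
  define y where "y = int j"
  have q: "Q (M+2) y \<le> 0" using d D_iff[OF h1(2)] by (simp add: M_def y_def add.commute)
  have r: "2*y \<le> M - 1" "y \<ge> 0" "M \<ge> 1" using h1 by (auto simp: M_def y_def)
  have "Q M y \<le> 0"
  proof (cases "10*y \<le> 4*M")
    case True
    have "Q M y = Q (M+2) y - 4*M + 10*y" by (simp add: Q_def algebra_simps)
    thus ?thesis using q True by linarith
  next
    case False
    have p: "(10*y - 4*M) * (10*y - 5*M) \<le> 0"
      using False r by (intro mult_nonneg_nonpos) auto
    have my: "M*y \<ge> 0" using r by simp
    have "20 * Q M y = (10*y - 4*M) * (10*y - 5*M) + (60*y - 10*M*y - 40*M)"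
      by (simp add: Q_def algebra_simps)
    thus ?thesis using p my r by linarith
  qed
  thus ?thesis using D_iff[OF h1(1)] by (simp add: M_def y_def)
qed

lemma F2: "D (n+4) j \<Longrightarrow> 1 \<le> j \<and> D n (j - 1)"
proof (cases "n + 4 < 2 * j")
  case True
  assume d: "D (n+4) j"
  have "n < 2 * (j - 1)" using True by auto
  thus ?thesis using True D_triv by auto
next
  case False
  assume d: "D (n+4) j"
  have h1: "2*j \<le> n+4" using False by auto
  have q: "Q (int n + 5) (int j) \<le> 0" using d D_iff[OF h1] by (simp add: add.commute)
  have j1: "1 \<le> j"
  proof (rule ccontr)
    assume "\<not> 1 \<le> j" hence "j = 0" by simp
    hence "Q (int n + 5) (int j) = (int n + 5) * (int n + 3)" by (simp add: Q_def algebra_simps)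
    also have "\<dots> > 0" by simp
    finally show False using q by simp
  qed
  have "D n (j - 1)"
  proof (cases "n < 2 * (j - 1)")
    case True thus ?thesis by (rule D_triv)
  next
    case False
    have h2: "2 * (j-1) \<le> n" using False by simp
    define M where "M = int n + 1"
    define y where "y = int (j - 1)"
    have jy: "int j = y + 1" using j1 by (simp add: y_def of_nat_diff)
    have q': "Q (M+4) (y+1) \<le> 0" using q jy by (simp add: M_def add.commute)
    have r: "2*y \<le> M - 1" "y \<ge> 0" "M \<ge> 1" using h2 by (auto simp: M_def y_def)
    have "Q M y \<le> 0"
    proof (cases "10*y + 4 \<le> 3*M")
      case True
      have "Q M y = Q (M+4) (y+1) - 3*M + 10*y + 4" by (simp add: Q_def algebra_simps)
      thus ?thesis using q' True by linarith
    next
      case False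
      have p: "(10*y - 3*M + 3) * (10*y - 5*M + 5) \<le> 0"
        using False r by (intro mult_nonneg_nonpos) auto
      have my: "M * (10*y - 3*M + 3) \<ge> 0" using r False by simp
      have mm: "M * M \<ge> 0" by simp
      have "20 * Q M y = (10*y - 3*M + 3) * (10*y - 5*M + 5) - 2 * (M * (10*y - 3*M + 3))
           - M * M - 4*M - 20*y - 15"
        by (simp add: Q_def algebra_simps)
      thus ?thesis using p my mm r by linarith
    qed
    thus ?thesis using D_iff[OF h2] by (simp add: M_def y_def)
  qed
  thus ?thesis using j1 by simp
qed

definition lam :: "nat \<Rightarrow> nat" where "lam k = (LEAST j. D k j)"

lemma D_lam_iff: "D k j \<longleftrightarrow> lam k \<le> j"
proof
  assume "D k j" thus "lam k \<le> j" unfolding lam_def by (rule Least_le)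
next
  assume "lam k \<le> j"
  moreover have "D k (lam k)" unfolding lam_def using D_self by (rule LeastI)
  ultimately show "D k j" using D_mono by blast
qed

lemma lam_F4: "lam (n+2) \<le> lam n + 1"
  using F4[of n "lam n"] D_lam_iff by simp

lemma lam_F5: "lam n \<le> lam (n+2)"
  using F5[of n "lam (n+2)"] D_lam_iff by simp

lemma lam_F2: "lam n + 1 \<le> lam (n+4)"
  using F2[of n "lam (n+4)"] D_lam_iff by (simp, linarith)

lemma lam_F3: "lam (n+4) \<le> lam n + 2"
proof -
  have e: "n + 4 = Suc (Suc (Suc (Suc n)))" by simp
  show ?thesis using lam_F4[of n] lam_F4[of "n+2"] unfolding e by simp
qed

lemma pc_inc: "j < lam k \<Longrightarrow> pc k j < pc k (Suc j)"
  using D_lam_iff[of k j] by (simp add: D_def)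

lemma pc_dec: "lam k \<le> j \<Longrightarrow> pc k (Suc j) \<le> pc k j"
  using D_lam_iff[of k j] by (simp add: D_def)

lemma is_mode_unique: "is_mode p i \<Longrightarrow> is_mode p i' \<Longrightarrow> i = i'"
proof (rule ccontr)
  assume a: "is_mode p i" "is_mode p i'" "i \<noteq> i'"
  { fix a b assume ma: "is_mode p a" and mb: "is_mode p b" and ab: "a < b"
    have "coeff p (b - 1) < coeff p b" using mb ab by (simp add: is_mode_def)
    moreover have "coeff p (Suc (b - 1)) \<le> coeff p (b - 1)"
    proof -
      have "\<forall>j\<ge>a. coeff p (Suc j) \<le> coeff p j" using ma by (simp add: is_mode_def)
      moreover have "a \<le> b - 1" using ab by simp
      ultimately show ?thesis by blast
    qed
    ultimately have False using ab by simp }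
  thus False using a by (metis linorder_neqE_nat)
qed

lemma mode_eq: "is_mode p i \<Longrightarrow> mode p = i"
  unfolding mode_def using is_mode_unique by blast

lemma path_mode: "mode (indep_poly (path_V k) path_E) = lam k"
proof (rule mode_eq)
  have c: "\<And>j. coeff (indep_poly (path_V k) path_E) j = pc k j"
    by (simp add: coeff_indep_poly path_count)
  show "is_mode (indep_poly (path_V k) path_E) (lam k)"
    unfolding is_mode_def c using pc_inc[of "lam k - 1" k] pc_dec[of k]
    by auto
qed

definition sh :: "(nat \<Rightarrow> nat) \<Rightarrow> nat \<Rightarrow> nat" where
  "sh f j = (case j of 0 \<Rightarrow> 0 | Suc i \<Rightarrow> f i)"

lemma sh_0[simp]: "sh f 0 = 0" and sh_Suc[simp]: "sh f (Suc i) = f i"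
  by (simp_all add: sh_def)

definition tf :: "nat \<Rightarrow> nat \<Rightarrow> nat" where
  "tf n j = pc (n+4) j + sh (pc n) j + 2 * sh (sh (pc n)) j"

lemma tf_rec: "tf (Suc (Suc n)) (Suc j) = tf (Suc n) (Suc j) + tf n j"
proof -
  have a: "pc (Suc (Suc n) + 4) (Suc j) = pc (Suc n + 4) (Suc j) + pc (n+4) j"
    using pc_rec[of "n+4" j] by simp
  have b: "sh (pc (Suc (Suc n))) (Suc j) = sh (pc (Suc n)) (Suc j) + sh (pc n) j"
    by (cases j) (simp_all add: pc_rec)
  have c: "sh (sh (pc (Suc (Suc n)))) (Suc j) = sh (sh (pc (Suc n))) (Suc j) + sh (sh (pc n)) j"
  proof (cases j)
    case 0 thus ?thesis by simp
  next
    case (Suc i) thus ?thesis by (cases i) (simp_all add: pc_rec)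
  qed
  show ?thesis unfolding tf_def using a b c by simp
qed

lemma tad_fin[simp]: "finite (tadpole_V m n)" by (simp add: tadpole_V_def)

lemma tad_E_cong:
  assumes "n \<le> n'" "x \<in> tadpole_V 5 n" "y \<in> tadpole_V 5 n"
  shows "tadpole_E 5 n' x y = tadpole_E 5 n x y"
proof (cases x)
  case (Inl a) thus ?thesis using assms by (cases y) (auto simp: tadpole_V_def tadpole_E_def)
next
  case (Inr a)
  show ?thesis
  proof (cases y)
    case (Inl b) thus ?thesis using Inr assms by (simp add: tadpole_V_def tadpole_E_def)
  next
    case (Inr b)
    have "a \<le> n" "b \<le> n" using assms \<open>x = Inr a\<close> Inr by (auto simp: tadpole_V_def)
    thus ?thesis using Inr \<open>x = Inr a\<close> assms(1) unfolding tadpole_E_def by auto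
  qed
qed

abbreviation T :: "nat \<Rightarrow> nat \<Rightarrow> nat" where
  "T n j \<equiv> indep_count (tadpole_V 5 n) (tadpole_E 5 n) j"

lemma T_rec: "T (Suc (Suc n)) (Suc j) = T (Suc n) (Suc j) + T n j"
proof -
  let ?V = "tadpole_V 5 (Suc (Suc n))" and ?E = "tadpole_E 5 (Suc (Suc n))"
  let ?v = "Inr (Suc (Suc n)) :: nat + nat"
  have "indep_count ?V ?E (Suc j) = indep_count (?V - {?v}) ?E (Suc j) +
        indep_count (?V - {?v} - {u. ?E ?v u \<or> ?E u ?v}) ?E j"
    by (rule indep_count_delete) (auto simp: tadpole_V_def tadpole_E_def)
  moreover have "?V - {?v} = tadpole_V 5 (Suc n)"
    by (auto simp: tadpole_V_def)
  moreover have "?V - {?v} - {u. ?E ?v u \<or> ?E u ?v} = tadpole_V 5 n"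
  proof (intro equalityI subsetI)
    fix x assume "x \<in> ?V - {?v} - {u. ?E ?v u \<or> ?E u ?v}"
    thus "x \<in> tadpole_V 5 n" by (cases x) (auto simp: tadpole_V_def tadpole_E_def)
  next
    fix x assume "x \<in> tadpole_V 5 n"
    thus "x \<in> ?V - {?v} - {u. ?E ?v u \<or> ?E u ?v}"
      by (cases x) (auto simp: tadpole_V_def tadpole_E_def)
  qed
  moreover have "indep_count (tadpole_V 5 (Suc n)) ?E (Suc j) = T (Suc n) (Suc j)"
    by (rule indep_count_cong) (rule tad_E_cong, auto)
  moreover have "indep_count (tadpole_V 5 n) ?E j = T n j"
    by (rule indep_count_cong) (rule tad_E_cong, auto)
  ultimately show ?thesis by simp
qed

lemma ic_filter: "finite V \<Longrightarrow> indep_count V E k = card (Set.filter (\<lambda>S. independent_set V E S \<and> card S = k) (Pow V))"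
  unfolding indep_count_def independent_set_def by (rule arg_cong[where f=card]) auto

lemma tv0: "tadpole_V 5 0 = set [Inl 1, Inl 2, Inl 3, Inl 4, Inl 5]"
  by (auto simp: tadpole_V_def)
lemma tv1: "tadpole_V 5 1 = set [Inl 1, Inl 2, Inl 3, Inl 4, Inl 5, Inr 1]"
  by (auto simp: tadpole_V_def)

lemma card_tv: "card (tadpole_V 5 0) = 5" "card (tadpole_V 5 1) = 6"
  unfolding tv0 tv1 by simp_all

lemma tf_big: "7 \<le> j \<Longrightarrow> tf n j = 0 \<or> n > 1"
proof -
  assume j: "7 \<le> j"
  define i where "i = j - 2"
  have i: "j = Suc (Suc i)" "5 \<le> i" using j by (simp_all add: i_def)
  show ?thesis
  proof (cases "n \<le> 1")
    case True
    have "pc (n+4) j = 0" "pc n (Suc i) = 0" "pc n i = 0" using True i j by (simp_all add: pc_def)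
    thus ?thesis unfolding tf_def i by simp
  qed simp
qed

lemma count_list:
  assumes "distinct xs"
  shows "indep_count (set xs) E k = length (filter (\<lambda>ys. independent_set (set xs) E (set ys) \<and> card (set ys) = k) (subseqs xs))"
proof -
  let ?P = "\<lambda>S. independent_set (set xs) E S \<and> card S = k"
  define L where "L = filter ?P (map set (subseqs xs))"
  have e: "{S. ?P S} = set L"
    using subseqs_powset[of xs] by (auto simp: independent_set_def L_def)
  have "distinct L"
    using distinct_set_subseqs[OF assms] by (simp add: L_def)
  hence "card (set L) = length L" by (rule distinct_card)
  hence "card {S. ?P S} = length (filter ?P (map set (subseqs xs)))"
    unfolding e L_def .
  thus ?thesis by (simp add: indep_count_def filter_map comp_def)
qed
lemma T_base0: "T 0 j = tf 0 j"
proof (cases "j < 7")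
  case True
  have dl: "distinct [Inl 1, Inl 2, Inl 3, Inl 4, Inl (5::nat) :: nat + nat]" by simp
  have "list_all (\<lambda>j. T 0 j = tf 0 j) [0..<7]"
    unfolding tv0 count_list[OF dl] tf_def sh_def pc_def by code_simp
  thus ?thesis using True by (simp add: list_all_iff)
next
  case False
  thus ?thesis using indep_count_big[of "tadpole_V 5 0" j] card_tv tf_big[of j 0] by simp
qed

lemma T_base1: "T 1 j = tf 1 j"
proof (cases "j < 7")
  case True
  have dl: "distinct [Inl 1, Inl 2, Inl 3, Inl 4, Inl 5, Inr (1::nat) :: nat + nat]" by simp
  have "list_all (\<lambda>j. T 1 j = tf 1 j) [0..<7]"
    unfolding tv1 count_list[OF dl] tf_def sh_def pc_def by code_simp
  thus ?thesis using True by (simp add: list_all_iff)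
next
  case False
  thus ?thesis using indep_count_big[of "tadpole_V 5 1" j] card_tv tf_big[of j 1] by simp
qed

lemma T_tf: "T n j = tf n j"
proof (induction n arbitrary: j rule: less_induct)
  case (less n)
  show ?case
  proof (cases n)
    case 0 thus ?thesis using T_base0 by simp
  next
    case (Suc n1)
    show ?thesis
    proof (cases n1)
      case 0 thus ?thesis using T_base1 Suc by simp
    next
      case (Suc n2)
      show ?thesis
      proof (cases j)
        case 0 thus ?thesis by (simp add: indep_count_zero tf_def)
      next
        case (Suc i)
        thus ?thesis using \<open>n = Suc n1\<close> \<open>n1 = Suc n2\<close> T_rec tf_rec less by simp
      qed
    qed
  qed
qed

lemma tad_coeff: "coeff (indep_poly (tadpole_V 5 n) (tadpole_E 5 n)) j = tf n j"
  by (simp add: coeff_indep_poly T_tf)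

lemma tf_inc: "j \<le> lam n \<Longrightarrow> tf n j < tf n (Suc j)"
proof -
  assume j: "j \<le> lam n"
  have e: "pc (n+4) j < pc (n+4) (Suc j)" using lam_F2[of n] j by (intro pc_inc) simp
  have s1: "sh (pc n) j \<le> sh (pc n) (Suc j)"
  proof (cases j)
    case (Suc i) thus ?thesis using pc_inc[of i n] j by simp
  qed simp
  have s2: "sh (sh (pc n)) j \<le> sh (sh (pc n)) (Suc j)"
  proof (cases j)
    case (Suc i) note ji = this
    show ?thesis
    proof (cases i)
      case (Suc l) thus ?thesis using ji pc_inc[of l n] j by simp
    qed (simp add: ji)
  qed simp
  show ?thesis unfolding tf_def using e s1 s2 by simp
qed

lemma tf_dec: "lam n + 2 \<le> j \<Longrightarrow> tf n (Suc j) \<le> tf n j"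
proof -
  assume j: "lam n + 2 \<le> j"
  define l where "l = j - 2"
  have l: "j = Suc (Suc l)" "lam n \<le> l" using j by (simp_all add: l_def)
  have e: "pc (n+4) (Suc j) \<le> pc (n+4) j" using lam_F3[of n] j by (intro pc_dec) simp
  have s1: "pc n j \<le> pc n (Suc l)" using pc_dec[of n "Suc l"] l by simp
  have s2: "pc n (Suc l) \<le> pc n l" using pc_dec[of n l] l by simp
  show ?thesis unfolding tf_def using e s1 s2 l by simp
qed

theorem proposition3p5:
  fixes n :: nat
  assumes "n \<ge> 5"
  shows "unimodal (indep_poly (tadpole_V 5 n) (tadpole_E 5 n)) \<and>
         mode (indep_poly (tadpole_V 5 n) (tadpole_E 5 n))
           \<in> {mode (indep_poly (path_V (n + 2)) path_E),
              mode (indep_poly (path_V (n + 2)) path_E) + 1,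
              mode (indep_poly (path_V (n + 2)) path_E) + 2}"
proof -
  let ?p = "indep_poly (tadpole_V 5 n) (tadpole_E 5 n)"
  define L where "L = lam n"
  define mu where "mu = (if tf n (L+2) \<le> tf n (L+1) then L+1 else L+2)"
  have inc: "\<And>j. j \<le> L \<Longrightarrow> tf n j < tf n (Suc j)" using tf_inc L_def by simp
  have dec: "\<And>j. L + 2 \<le> j \<Longrightarrow> tf n (Suc j) \<le> tf n j" using tf_dec L_def by simp
  have mu_range: "mu = L+1 \<or> mu = L+2" by (simp add: mu_def)
  have mode_mu: "is_mode ?p mu"
  proof (cases "tf n (L+2) \<le> tf n (L+1)")
    case True
    hence m: "mu = L+1" by (simp add: mu_def)
    have "tf n L < tf n (L+1)" using inc[of L] by simp
    moreover have "\<forall>j\<ge>L+1. tf n (Suc j) \<le> tf n j"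
    proof (intro allI impI)
      fix j assume "L+1 \<le> j"
      thus "tf n (Suc j) \<le> tf n j" using True dec[of j] by (cases "j = L+1") auto
    qed
    ultimately show ?thesis unfolding is_mode_def tad_coeff m by simp
  next
    case False
    hence m: "mu = L+2" by (simp add: mu_def)
    have "tf n (L+1) < tf n (L+2)" using False by simp
    moreover have "\<forall>j\<ge>L+2. tf n (Suc j) \<le> tf n j" using dec by simp
    ultimately show ?thesis unfolding is_mode_def tad_coeff m by simp
  qed
  have uni: "unimodal ?p"
    unfolding unimodal_def
  proof (intro exI[of _ mu] conjI allI impI)
    fix i assume "i < mu"
    show "coeff ?p i \<le> coeff ?p (Suc i)"
    proof (cases "i \<le> L")
      case True thus ?thesis using inc[of i] unfolding tad_coeff by simp
    next
      case False
      hence m: "mu = L+2" and i: "i = L+1" using \<open>i < mu\<close> mu_range by auto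
      have "coeff ?p (mu - 1) < coeff ?p mu" using mode_mu m unfolding is_mode_def by simp
      thus ?thesis using m i by simp
    qed
  next
    fix i assume "mu \<le> i"
    thus "coeff ?p (Suc i) \<le> coeff ?p i" using mode_mu unfolding is_mode_def by simp
  qed
  have mp: "mode ?p = mu" by (rule mode_eq[OF mode_mu])
  have ml: "mode (indep_poly (path_V (n + 2)) path_E) = lam (n+2)" by (rule path_mode)
  have b: "L \<le> lam (n+2)" "lam (n+2) \<le> L + 1" using lam_F4[of n] lam_F5[of n] L_def by simp_all
  have r: "mu = lam (n+2) \<or> mu = lam (n+2) + 1 \<or> mu = lam (n+2) + 2"
    using mu_range b by linarith
  show ?thesis unfolding mp ml using uni r by blast
qed

end
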